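(* If a set $W\subseteq V$ (with $|W|\ge3$) can be generated from some connected pair, then there exists $X\supseteq W$ such that $D[X]$ is a directed sub-block, and there is a node $i\in W$ that is reachable from all other nodes both in $D[W]$ and in $D[X]$.
   Context: $D=(V,A)$ is a directed graph. $\mathrm{IN}(X)$ is the set of nodes from which some member of $X$ is reachable by a directed path ($X\subseteq\mathrm{IN}(X)$). For disjoint nonempty $X,Y,Z\subseteq V$, $f_E(X,Y,Z)=1$ iff $\mathrm{IN}(X)\cap\mathrm{IN}(Y)=\emptyset$ computed in $D-Z$; a node $j$ is dynamically partitioning relative to $k$ and $Y$ iff $f_E(\{k\},Y,\{j\})=1$. A connected pair is a set $\{i,j\}$ with $(i,j)\in A$ or $(j,i)\in A$. Generation: a set $W_n$ of size $n$ can be generated from a set $W_m$ of size $m$, $2\le m<n$, iff there are sets $W_m\subset W_{m+1}\subset\dots\subset W_n$ with $W_{l+1}=W_l\cup\{k\}$ for a single node $k\in V\setminus W_l$ such that there is an arc from $k$ to some $j\in W_l$ which is not dynamically partitioning relative to $k$ and $W_l\setminus\{j\}$. $D[W]$ is the subgraph induced on $W$. "Reachable in $D[W]$" means via a directed path inside $D[W]$. A graph is biconnected if it has at least three vertices, is connected, and stays connected after deleting any single vertex. $D[X]$ is a directed sub-block if some node of $X$ is reachable within $D[X]$ from every other node of $X$ and the underlying undirected graph of $D[X]$ is biconnected. *)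

theory Defs
  imports Main
begin

definition induced_arcs :: "('a \<times> 'a) set \<Rightarrow> 'a set \<Rightarrow> ('a \<times> 'a) set" where
  "induced_arcs A S = A \<inter> (S \<times> S)"

definition IN_minus :: "'a set \<Rightarrow> ('a \<times> 'a) set \<Rightarrow> 'a set \<Rightarrow> 'a set \<Rightarrow> 'a set" where
  "IN_minus V A Z X = {u \<in> V - Z. \<exists>x\<in>X. (u, x) \<in> (induced_arcs A (V - Z))\<^sup>*}"

definition f_E :: "'a set \<Rightarrow> ('a \<times> 'a) set \<Rightarrow> 'a set \<Rightarrow> 'a set \<Rightarrow> 'a set \<Rightarrow> bool" where
  "f_E V A X Y Z \<longleftrightarrow> IN_minus V A Z X \<inter> IN_minus V A Z Y = {}"

definition dyn_partitioning :: "'a set \<Rightarrow> ('a \<times> 'a) set \<Rightarrow> 'a \<Rightarrow> 'a \<Rightarrow> 'a set \<Rightarrow> bool" where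
  "dyn_partitioning V A j k Y \<longleftrightarrow> f_E V A {k} Y {j}"

definition connected_pair :: "('a \<times> 'a) set \<Rightarrow> 'a set \<Rightarrow> bool" where
  "connected_pair A P \<longleftrightarrow> (\<exists>i j. i \<noteq> j \<and> P = {i, j} \<and> ((i, j) \<in> A \<or> (j, i) \<in> A))"

definition gen_step :: "'a set \<Rightarrow> ('a \<times> 'a) set \<Rightarrow> 'a set \<Rightarrow> 'a set \<Rightarrow> bool" where
  "gen_step V A W W' \<longleftrightarrow> (\<exists>k \<in> V - W. W' = insert k W \<and>
      (\<exists>j\<in>W. (k, j) \<in> A \<and> \<not> dyn_partitioning V A j k (W - {j})))"

inductive generated :: "'a set \<Rightarrow> ('a \<times> 'a) set \<Rightarrow> 'a set \<Rightarrow> 'a set \<Rightarrow> bool"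
  for V A W0 where
  gen_refl: "generated V A W0 W0"
| gen_step: "generated V A W0 W \<Longrightarrow> gen_step V A W W' \<Longrightarrow> generated V A W0 W'"

definition can_be_generated_from :: "'a set \<Rightarrow> ('a \<times> 'a) set \<Rightarrow> 'a set \<Rightarrow> 'a set \<Rightarrow> bool" where
  "can_be_generated_from V A W0 W \<longleftrightarrow>
     2 \<le> card W0 \<and> card W0 < card W \<and> generated V A W0 W"

definition und_connected :: "('a \<times> 'a) set \<Rightarrow> 'a set \<Rightarrow> bool" where
  "und_connected A S \<longleftrightarrow>
     (\<forall>u\<in>S. \<forall>v\<in>S. (u, v) \<in> (induced_arcs (A \<union> A\<inverse>) S)\<^sup>*)"

definition und_biconnected :: "('a \<times> 'a) set \<Rightarrow> 'a set \<Rightarrow> bool" where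
  "und_biconnected A S \<longleftrightarrow> finite S \<and> 3 \<le> card S \<and> und_connected A S \<and>
     (\<forall>v\<in>S. und_connected A (S - {v}))"

definition directed_sub_block :: "('a \<times> 'a) set \<Rightarrow> 'a set \<Rightarrow> bool" where
  "directed_sub_block A X \<longleftrightarrow>
     (\<exists>r\<in>X. \<forall>u\<in>X. (u, r) \<in> (induced_arcs A X)\<^sup>*) \<and> und_biconnected A X"

end

theory Submission
  imports Defs
begin


lemma ind_mono: "S \<subseteq> T \<Longrightarrow> (x,y) \<in> (induced_arcs A S)\<^sup>* \<Longrightarrow> (x,y) \<in> (induced_arcs A T)\<^sup>*"
  by (erule rtrancl_mono[THEN subsetD, rotated]) (auto simp: induced_arcs_def)

lemma ind_mono_arcs: "A \<subseteq> B \<Longrightarrow> (x,y) \<in> (induced_arcs A S)\<^sup>* \<Longrightarrow> (x,y) \<in> (induced_arcs B S)\<^sup>*"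
  by (erule rtrancl_mono[THEN subsetD, rotated]) (auto simp: induced_arcs_def)

lemma ind_mem: "(x,y) \<in> (induced_arcs A S)\<^sup>* \<Longrightarrow> x = y \<or> (x \<in> S \<and> y \<in> S)"
  by (induction rule: rtrancl_induct) (auto simp: induced_arcs_def)

lemma und_sym: "(x,y) \<in> (induced_arcs (A \<union> A\<inverse>) S)\<^sup>* \<Longrightarrow> (y,x) \<in> (induced_arcs (A \<union> A\<inverse>) S)\<^sup>*"
proof (induction rule: rtrancl_induct)
  case base then show ?case by simp
next
  case (step y z)
  then have "(z,y) \<in> induced_arcs (A \<union> A\<inverse>) S" by (auto simp: induced_arcs_def)
  then show ?case using step(3) by (rule converse_rtrancl_into_rtrancl)
qed

lemma dir_und: "(x,y) \<in> (induced_arcs A S)\<^sup>* \<Longrightarrow> (x,y) \<in> (induced_arcs (A \<union> A\<inverse>) S)\<^sup>*"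
  by (rule ind_mono_arcs) auto

lemma edge_ind: "(x,y) \<in> A \<Longrightarrow> x \<in> S \<Longrightarrow> y \<in> S \<Longrightarrow> (x,y) \<in> (induced_arcs A S)\<^sup>*"
  by (auto simp: induced_arcs_def)

lemma reroute:
  assumes "(a,b) \<in> (induced_arcs R S)\<^sup>*" "b \<notin> C" "v \<notin> C"
    and adj: "\<And>c d. c \<in> C \<Longrightarrow> d \<in> S \<Longrightarrow> (c,d) \<in> R \<or> (d,c) \<in> R \<Longrightarrow> d \<in> C \<or> d = v"
  shows "(a \<notin> C \<longrightarrow> (a,b) \<in> (induced_arcs R (S - C))\<^sup>*) \<and> (a \<in> C \<longrightarrow> (v,b) \<in> (induced_arcs R (S - C))\<^sup>*)"
  using assms(1)
proof (induction rule: converse_rtrancl_induct)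
  case base then show ?case using assms(2) by auto
next
  case (step a a')
  then have e: "(a,a') \<in> R" "a \<in> S" "a' \<in> S" by (auto simp: induced_arcs_def)
  show ?case
  proof (cases "a \<in> C")
    case True
    then show ?thesis
    proof (cases "a' \<in> C")
      case True then show ?thesis using step(3) \<open>a \<in> C\<close> by auto
    next
      case False
      then have "a' = v" using adj[of a a'] True e by auto
      then show ?thesis using step(3) False True by auto
    qed
  next
    case False
    then show ?thesis
    proof (cases "a' \<in> C")
      case True
      then have "a = v" using adj[of a' a] False e by auto
      then show ?thesis using step(3) False True by auto
    next
      case F2: False
      then have "(a,a') \<in> induced_arcs R (S - C)" using e False by (auto simp: induced_arcs_def)
      then show ?thesis using step(3) F2 False by (auto intro: converse_rtrancl_into_rtrancl)
    qed
  qed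
qed

lemma conn_core:
  assumes "und_connected A Y" "Y \<subseteq> T"
    and "\<forall>t\<in>T - Y. \<exists>y\<in>Y. (t,y) \<in> (induced_arcs (A \<union> A\<inverse>) T)\<^sup>*"
  shows "und_connected A T"
  unfolding und_connected_def
proof (intro ballI)
  fix p q assume p: "p \<in> T" and q: "q \<in> T"
  have h: "\<exists>y\<in>Y. (t,y) \<in> (induced_arcs (A \<union> A\<inverse>) T)\<^sup>*" if "t \<in> T" for t
    using assms(3) that by (cases "t \<in> Y") auto
  obtain y1 where y1: "y1 \<in> Y" "(p,y1) \<in> (induced_arcs (A \<union> A\<inverse>) T)\<^sup>*" using h p by blast
  obtain y2 where y2: "y2 \<in> Y" "(q,y2) \<in> (induced_arcs (A \<union> A\<inverse>) T)\<^sup>*" using h q by blast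
  have "(y1,y2) \<in> (induced_arcs (A \<union> A\<inverse>) T)\<^sup>*"
    using assms(1) y1 y2 assms(2) unfolding und_connected_def by (blast intro: ind_mono)
  then show "(p,q) \<in> (induced_arcs (A \<union> A\<inverse>) T)\<^sup>*"
    using y1 y2 und_sym[OF y2(2)] by (meson rtrancl_trans)
qed



lemma lasthit:
  assumes "(u,y) \<in> (induced_arcs A (V-{j}))\<^sup>*" "u \<in> V"
  shows "y \<notin> X \<longrightarrow> (u \<notin> X \<and> (u,y) \<in> (induced_arcs A (V-X))\<^sup>*) \<or>
     (\<exists>z\<in>X-{j}. \<exists>b. (z,b)\<in>A \<and> (b,y) \<in> (induced_arcs A (V-X))\<^sup>*)"
  using assms(1)
proof (induction rule: rtrancl_induct)
  case base then show ?case by auto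
next
  case (step y y')
  then have e: "(y,y') \<in> A" "y \<in> V-{j}" "y' \<in> V-{j}" by (auto simp: induced_arcs_def)
  show ?case
  proof
    assume y': "y' \<notin> X"
    show "(u \<notin> X \<and> (u,y') \<in> (induced_arcs A (V-X))\<^sup>*) \<or>
     (\<exists>z\<in>X-{j}. \<exists>b. (z,b)\<in>A \<and> (b,y') \<in> (induced_arcs A (V-X))\<^sup>*)"
    proof (cases "y \<in> X")
      case True then show ?thesis using e by blast
    next
      case False
      then have ed: "(y,y') \<in> induced_arcs A (V-X)" using e y' by (auto simp: induced_arcs_def)
      from step(3) False have "(u \<notin> X \<and> (u,y) \<in> (induced_arcs A (V-X))\<^sup>*) \<or>
     (\<exists>z\<in>X-{j}. \<exists>b. (z,b)\<in>A \<and> (b,y) \<in> (induced_arcs A (V-X))\<^sup>*)" by simp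
      then show ?thesis
      proof
        assume "u \<notin> X \<and> (u,y) \<in> (induced_arcs A (V-X))\<^sup>*"
        then show ?thesis using ed by (blast intro: rtrancl_into_rtrancl)
      next
        assume "\<exists>z\<in>X-{j}. \<exists>b. (z,b)\<in>A \<and> (b,y) \<in> (induced_arcs A (V-X))\<^sup>*"
        then show ?thesis using ed by (blast intro: rtrancl_into_rtrancl)
      qed
    qed
  qed
qed

lemma firsthit:
  assumes "(u,w) \<in> (induced_arcs A (V-{j}))\<^sup>*" "w \<in> X" "u \<notin> X" "u \<in> V"
  shows "\<exists>m z. (u,m) \<in> (induced_arcs A (V-X))\<^sup>* \<and> m \<in> V - X \<and> (m,z) \<in> A \<and> z \<in> X - {j}"
  using assms(1,3,4)
proof (induction rule: converse_rtrancl_induct)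
  case base then show ?case using assms(2) by auto
next
  case (step u u')
  then have e: "(u,u') \<in> A" "u \<in> V-{j}" "u' \<in> V-{j}" by (auto simp: induced_arcs_def)
  show ?case
  proof (cases "u' \<in> X")
    case True then show ?thesis using e step(4) by blast
  next
    case False
    then obtain m z where mz: "(u',m) \<in> (induced_arcs A (V-X))\<^sup>*" "m \<in> V - X" "(m,z) \<in> A" "z \<in> X - {j}"
      using step(3) e by blast
    have "(u,u') \<in> induced_arcs A (V-X)" using e False step(4) by (auto simp: induced_arcs_def)
    then show ?thesis using mz by (meson converse_rtrancl_into_rtrancl)
  qed
qed

lemma path_in_N0:
  assumes "(a,b) \<in> (induced_arcs A (V-X))\<^sup>*"
    and N0: "N0 = {n \<in> V - X. \<exists>m x. (n,m) \<in> (induced_arcs A (V-X))\<^sup>* \<and> (m,x) \<in> A \<and> x \<in> X}"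
    and "b \<in> N0"
  shows "a \<in> N0 \<and> (a,b) \<in> (induced_arcs A N0)\<^sup>*"
  using assms(1)
proof (induction rule: converse_rtrancl_induct)
  case base then show ?case using assms(3) by simp
next
  case (step a a')
  then have e: "(a,a') \<in> induced_arcs A (V-X)" by simp
  then have e2: "a \<in> V - X" "(a,a') \<in> A" by (auto simp: induced_arcs_def)
  from step(3) have "a' \<in> N0" by simp
  then obtain m x where mx: "(a',m) \<in> (induced_arcs A (V-X))\<^sup>*" "(m,x) \<in> A" "x \<in> X" 
    unfolding N0 by blast
  have "(a,m) \<in> (induced_arcs A (V-X))\<^sup>*" using e mx(1) by (rule converse_rtrancl_into_rtrancl)
  then have aN: "a \<in> N0" using e2 mx unfolding N0 by blast
  have "(a,a') \<in> induced_arcs A N0"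
    using aN \<open>a' \<in> N0\<close> e2 by (simp add: induced_arcs_def)
  then show ?case using aN step(3) by (blast intro: converse_rtrancl_into_rtrancl)
qed



lemma ear:
  assumes finV: "finite V" and XV: "X \<subseteq> V" and jX: "j \<in> X" and kV: "k \<in> V" and kX: "k \<notin> X"
    and kj: "(k,j) \<in> A"
    and uV: "u \<in> V - {j}" and uk: "(u,k) \<in> (induced_arcs A (V-{j}))\<^sup>*"
    and wX: "w \<in> X - {j}" and uw: "(u,w) \<in> (induced_arcs A (V-{j}))\<^sup>*"
    and bc1: "und_connected A X" and bc2: "\<forall>v\<in>X. und_connected A (X-{v})"
  shows "\<exists>N. k \<in> N \<and> N \<subseteq> V \<and> und_connected A (X \<union> N) \<and>
    (\<forall>v\<in>X\<union>N. und_connected A ((X\<union>N)-{v})) \<and>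
    (\<forall>n\<in>N. \<exists>x\<in>X. (n,x) \<in> (induced_arcs A (X \<union> N))\<^sup>*)"
proof -
  define Good where "Good N \<longleftrightarrow> N \<subseteq> V - X \<and> k \<in> N \<and>
     (\<forall>n\<in>N. \<exists>x\<in>X. (n,x) \<in> (induced_arcs A (X \<union> N))\<^sup>*) \<and>
     (\<exists>z\<in>X-{j}. (k,z) \<in> (induced_arcs (A \<union> A\<inverse>) (N \<union> {z}))\<^sup>*)" for N
  define N0 where "N0 = {n \<in> V - X. \<exists>m x. (n,m) \<in> (induced_arcs A (V-X))\<^sup>* \<and> (m,x) \<in> A \<and> x \<in> X}"
  have kN0: "k \<in> N0" using kV kX kj jX unfolding N0_def by blast
  have G1: "\<forall>n\<in>N0. \<exists>x\<in>X. (n,x) \<in> (induced_arcs A (X \<union> N0))\<^sup>*"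
  proof
    fix n assume n: "n \<in> N0"
    then obtain m x where mx: "(n,m) \<in> (induced_arcs A (V-X))\<^sup>*" "(m,x) \<in> A" "x \<in> X"
      unfolding N0_def by blast
    have "m \<in> V - X" using ind_mem[OF mx(1)] n unfolding N0_def by auto
    then have mN: "m \<in> N0" using mx unfolding N0_def by blast
    have "(n,m) \<in> (induced_arcs A N0)\<^sup>*" using path_in_N0[OF mx(1) N0_def mN] by blast
    then have "(n,m) \<in> (induced_arcs A (X \<union> N0))\<^sup>*" by (rule ind_mono[rotated]) auto
    moreover have "(m,x) \<in> induced_arcs A (X \<union> N0)" using mN mx by (auto simp: induced_arcs_def)
    ultimately show "\<exists>x\<in>X. (n,x) \<in> (induced_arcs A (X \<union> N0))\<^sup>*" using mx(3)
      by (blast intro: rtrancl_into_rtrancl)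
  qed
  have uVV: "u \<in> V" using uV by simp
  have G2: "\<exists>z\<in>X-{j}. (k,z) \<in> (induced_arcs (A \<union> A\<inverse>) (N0 \<union> {z}))\<^sup>*"
  proof -
    from lasthit[OF uk uVV, of X] kX
    have "(u \<notin> X \<and> (u,k) \<in> (induced_arcs A (V-X))\<^sup>*) \<or>
     (\<exists>z\<in>X-{j}. \<exists>b. (z,b)\<in>A \<and> (b,k) \<in> (induced_arcs A (V-X))\<^sup>*)" by simp
    then show ?thesis
    proof
      assume h: "u \<notin> X \<and> (u,k) \<in> (induced_arcs A (V-X))\<^sup>*"
      obtain m z where mz: "(u,m) \<in> (induced_arcs A (V-X))\<^sup>*" "m \<in> V-X" "(m,z) \<in> A" "z \<in> X - {j}"
        using firsthit[OF uw _ _ uVV] wX h by blast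
      have mN: "m \<in> N0" using mz unfolding N0_def by blast
      have p1: "(u,k) \<in> (induced_arcs A N0)\<^sup>*" using path_in_N0[OF _ N0_def kN0] h by blast
      have p2: "(u,m) \<in> (induced_arcs A N0)\<^sup>*" using path_in_N0[OF mz(1) N0_def mN] by blast
      have "(k,u) \<in> (induced_arcs (A \<union> A\<inverse>) (N0 \<union> {z}))\<^sup>*"
        by (rule und_sym, rule dir_und, rule ind_mono[OF _ p1]) auto
      moreover have "(u,m) \<in> (induced_arcs (A \<union> A\<inverse>) (N0 \<union> {z}))\<^sup>*"
        by (rule dir_und, rule ind_mono[OF _ p2]) auto
      moreover have "(m,z) \<in> induced_arcs (A \<union> A\<inverse>) (N0 \<union> {z})"
        using mN mz by (auto simp: induced_arcs_def)
      ultimately show ?thesis using mz(4) by (blast intro: rtrancl_trans rtrancl_into_rtrancl)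
    next
      assume "\<exists>z\<in>X-{j}. \<exists>b. (z,b)\<in>A \<and> (b,k) \<in> (induced_arcs A (V-X))\<^sup>*"
      then obtain z b where zb: "z \<in> X - {j}" "(z,b) \<in> A" "(b,k) \<in> (induced_arcs A (V-X))\<^sup>*" by blast
      have bp: "b \<in> N0 \<and> (b,k) \<in> (induced_arcs A N0)\<^sup>*" using path_in_N0[OF zb(3) N0_def kN0] .
      have "(k,b) \<in> (induced_arcs (A \<union> A\<inverse>) (N0 \<union> {z}))\<^sup>*"
        by (rule und_sym, rule dir_und, rule ind_mono[OF _ bp[THEN conjunct2]]) auto
      moreover have "(b,z) \<in> induced_arcs (A \<union> A\<inverse>) (N0 \<union> {z})"
        using bp zb by (auto simp: induced_arcs_def)
      ultimately show ?thesis using zb(1) by (blast intro: rtrancl_into_rtrancl)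
    qed
  qed
  have "Good N0" unfolding Good_def using kN0 G1 G2 by (auto simp: N0_def)
  then obtain N where gN: "Good N" and minN: "\<And>N'. Good N' \<Longrightarrow> card N \<le> card N'"
    using ex_has_least_nat[of Good N0 card] by blast
  from gN have NV: "N \<subseteq> V - X" and kN: "k \<in> N"
    and NG1: "\<forall>n\<in>N. \<exists>x\<in>X. (n,x) \<in> (induced_arcs A (X \<union> N))\<^sup>*"
    and NG2: "\<exists>z\<in>X-{j}. (k,z) \<in> (induced_arcs (A \<union> A\<inverse>) (N \<union> {z}))\<^sup>*"
    unfolding Good_def by auto
  have finN: "finite N" using NV finV by (meson Diff_subset finite_subset subset_trans)
  have key: "\<forall>n\<in>N-{v}. \<exists>x\<in>X-{v}. (n,x) \<in> (induced_arcs (A \<union> A\<inverse>) ((X\<union>N)-{v}))\<^sup>*" for v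
  proof (rule ballI, rule ccontr)
    fix n assume n: "n \<in> N - {v}"
      and nc: "\<not> (\<exists>x\<in>X-{v}. (n,x) \<in> (induced_arcs (A \<union> A\<inverse>) ((X\<union>N)-{v}))\<^sup>*)"
    define C where "C = {c. (n,c) \<in> (induced_arcs (A \<union> A\<inverse>) ((X\<union>N)-{v}))\<^sup>*}"
    have nC: "n \<in> C" unfolding C_def by simp
    have Csub: "C \<subseteq> (X\<union>N)-{v}"
    proof
      fix c assume "c \<in> C"
      then have "(n,c) \<in> (induced_arcs (A \<union> A\<inverse>) ((X\<union>N)-{v}))\<^sup>*" unfolding C_def by simp
      from ind_mem[OF this] n show "c \<in> (X\<union>N)-{v}" by auto
    qed
    have CX: "C \<inter> X = {}"
    proof (rule ccontr)
      assume "C \<inter> X \<noteq> {}"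
      then obtain c where c: "c \<in> C" "c \<in> X" by blast
      then have "c \<in> X - {v}" using Csub by blast
      then show False using nc c unfolding C_def by blast
    qed
    have vC: "v \<notin> C" using Csub by blast
    have adj: "d \<in> C \<or> d = v" if "c \<in> C" "d \<in> X \<union> N" "(c,d) \<in> A \<or> (d,c) \<in> A" for c d
    proof (cases "d = v")
      case False
      have "c \<in> (X\<union>N)-{v}" using that Csub by blast
      then have "(c,d) \<in> induced_arcs (A \<union> A\<inverse>) ((X\<union>N)-{v})"
        using that False by (auto simp: induced_arcs_def)
      then show ?thesis using that(1) unfolding C_def by (blast intro: rtrancl_into_rtrancl)
    qed simp
    have jN: "j \<notin> N" using NV jX by blast
    have kC: "k \<notin> C"
    proof
      assume kC: "k \<in> C"
      show False
      proof (cases "v = j")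
        case True
        obtain z where z: "z \<in> X - {j}" "(k,z) \<in> (induced_arcs (A \<union> A\<inverse>) (N \<union> {z}))\<^sup>*"
          using NG2 by blast
        have "(k,z) \<in> (induced_arcs (A \<union> A\<inverse>) ((X\<union>N)-{v}))\<^sup>*"
          by (rule ind_mono[OF _ z(2)]) (use z True jN in auto)
        then have "(n,z) \<in> (induced_arcs (A \<union> A\<inverse>) ((X\<union>N)-{v}))\<^sup>*"
          using kC unfolding C_def by (blast intro: rtrancl_trans)
        then show False using nc z True by blast
      next
        case False
        have "j \<in> C \<or> j = v" using adj[of k j] kC jX kj by blast
        then show False using False CX jX by blast
      qed
    qed
    define N' where "N' = N - C"
    have "Good N'"
      unfolding Good_def
    proof (intro conjI)
      show "N' \<subseteq> V - X" using NV unfolding N'_def by blast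
      show "k \<in> N'" using kN kC unfolding N'_def by blast
      show "\<forall>n\<in>N'. \<exists>x\<in>X. (n,x) \<in> (induced_arcs A (X \<union> N'))\<^sup>*"
      proof
        fix n' assume n': "n' \<in> N'"
        then obtain x where x: "x \<in> X" "(n',x) \<in> (induced_arcs A (X \<union> N))\<^sup>*"
          using NG1 unfolding N'_def by blast
        have xC: "x \<notin> C" using x CX by blast
        have "(n' \<notin> C \<longrightarrow> (n',x) \<in> (induced_arcs A ((X \<union> N) - C))\<^sup>*) \<and>
          (n' \<in> C \<longrightarrow> (v,x) \<in> (induced_arcs A ((X \<union> N) - C))\<^sup>*)"
          by (rule reroute[OF x(2) xC vC], rule adj)
        then have "(n',x) \<in> (induced_arcs A ((X \<union> N) - C))\<^sup>*" using n' unfolding N'_def by blast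
        moreover have "(X \<union> N) - C = X \<union> N'" using CX unfolding N'_def by blast
        ultimately show "\<exists>x\<in>X. (n',x) \<in> (induced_arcs A (X \<union> N'))\<^sup>*" using x by auto
      qed
      show "\<exists>z\<in>X-{j}. (k,z) \<in> (induced_arcs (A \<union> A\<inverse>) (N' \<union> {z}))\<^sup>*"
      proof -
        obtain z where z: "z \<in> X - {j}" "(k,z) \<in> (induced_arcs (A \<union> A\<inverse>) (N \<union> {z}))\<^sup>*"
          using NG2 by blast
        have zC: "z \<notin> C" using z CX by blast
        have adj2: "d \<in> C \<or> d = v" if "c \<in> C" "d \<in> N \<union> {z}"
          "(c,d) \<in> A \<union> A\<inverse> \<or> (d,c) \<in> A \<union> A\<inverse>" for c d
          using adj[of c d] that z by blast
        have "(k \<notin> C \<longrightarrow> (k,z) \<in> (induced_arcs (A \<union> A\<inverse>) ((N \<union> {z}) - C))\<^sup>*) \<and>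
          (k \<in> C \<longrightarrow> (v,z) \<in> (induced_arcs (A \<union> A\<inverse>) ((N \<union> {z}) - C))\<^sup>*)"
          by (rule reroute[OF z(2) zC vC], rule adj2) 
        then have "(k,z) \<in> (induced_arcs (A \<union> A\<inverse>) ((N \<union> {z}) - C))\<^sup>*" using kC by blast
        moreover have "(N \<union> {z}) - C = N' \<union> {z}" using zC unfolding N'_def by blast
        ultimately show ?thesis using z by auto
      qed
    qed
    have "card N' < card N"
      unfolding N'_def using finN nC n by (intro psubset_card_mono) auto
    then show False using minN[OF \<open>Good N'\<close>] by simp
  qed
  have c1: "und_connected A (X \<union> N)"
  proof (rule conn_core[OF bc1])
    show "X \<subseteq> X \<union> N" by blast
    show "\<forall>t\<in>X \<union> N - X. \<exists>y\<in>X. (t,y) \<in> (induced_arcs (A \<union> A\<inverse>) (X \<union> N))\<^sup>*"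
    proof
      fix t assume "t \<in> X \<union> N - X"
      then obtain x where "x \<in> X" "(t,x) \<in> (induced_arcs A (X \<union> N))\<^sup>*" using NG1 by blast
      then show "\<exists>y\<in>X. (t,y) \<in> (induced_arcs (A \<union> A\<inverse>) (X \<union> N))\<^sup>*"
        using dir_und[of t x A "X \<union> N"] by blast
    qed
  qed
  have c2: "und_connected A ((X\<union>N)-{v})" if v: "v \<in> X \<union> N" for v
  proof (cases "v \<in> X")
    case True
    show ?thesis
    proof (rule conn_core[OF bc2[rule_format, OF True]])
      show "X - {v} \<subseteq> X \<union> N - {v}" by blast
      show "\<forall>t\<in>X \<union> N - {v} - (X - {v}). \<exists>y\<in>X - {v}. (t, y) \<in> (induced_arcs (A \<union> A\<inverse>) (X \<union> N - {v}))\<^sup>*"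
        using key[of v] by blast
    qed
  next
    case False
    then have XX: "X - {v} = X" by blast
    show ?thesis
    proof (rule conn_core[OF bc1])
      show "X \<subseteq> X \<union> N - {v}" using False by blast
      show "\<forall>t\<in>X \<union> N - {v} - X. \<exists>y\<in>X. (t, y) \<in> (induced_arcs (A \<union> A\<inverse>) (X \<union> N - {v}))\<^sup>*"
        using key[of v] XX by auto
    qed
  qed
  have NV': "N \<subseteq> V" using NV by blast
  show ?thesis by (rule exI[of _ N], intro conjI ballI; (rule kN | rule NV' | rule c1 | rule c2 | use NG1 in blast)?)
qed



lemma main_ind:
  assumes "generated V A P W" and finV: "finite V" and AV: "A \<subseteq> V \<times> V" and cp: "connected_pair A P"
  shows "\<exists>r\<in>W. (\<forall>u\<in>W. (u,r) \<in> (induced_arcs A W)\<^sup>*) \<and>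
    (\<exists>X. W \<subseteq> X \<and> X \<subseteq> V \<and> und_connected A X \<and> (\<forall>v\<in>X. und_connected A (X-{v})) \<and>
       (\<forall>x\<in>X. (x,r) \<in> (induced_arcs A X)\<^sup>*))"
  using assms(1)
proof (induction rule: generated.induct)
  case gen_refl
  obtain r s where rs: "P = {r,s}" "(s,r) \<in> A" "r \<noteq> s"
    using cp unfolding connected_pair_def by (metis insert_commute)
  have PV: "P \<subseteq> V" using rs AV by auto
  have reach: "\<forall>u\<in>P. (u,r) \<in> (induced_arcs A P)\<^sup>*"
    using rs by (auto simp: induced_arcs_def)
  have uc: "und_connected A P"
    using rs unfolding und_connected_def induced_arcs_def
    by (auto intro: r_into_rtrancl)
  have uc2: "\<forall>v\<in>P. und_connected A (P-{v})"
    using rs unfolding und_connected_def by auto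
  show ?case using reach uc uc2 PV rs(1) by blast
next
  case (gen_step W W')
  from gen_step.IH obtain r X where r: "r \<in> W" "\<forall>u\<in>W. (u,r) \<in> (induced_arcs A W)\<^sup>*"
    and X: "W \<subseteq> X" "X \<subseteq> V" "und_connected A X" "\<forall>v\<in>X. und_connected A (X-{v})"
      "\<forall>x\<in>X. (x,r) \<in> (induced_arcs A X)\<^sup>*" by blast
  from gen_step.hyps(2) obtain k j where k: "k \<in> V - W" "W' = insert k W" and j: "j \<in> W" "(k,j) \<in> A"
    and nd: "\<not> dyn_partitioning V A j k (W - {j})"
    unfolding gen_step_def by blast
  from nd obtain u w where u: "u \<in> V - {j}" "(u,k) \<in> (induced_arcs A (V-{j}))\<^sup>*"
    and w: "w \<in> W - {j}" "(u,w) \<in> (induced_arcs A (V-{j}))\<^sup>*"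
    unfolding dyn_partitioning_def f_E_def IN_minus_def by blast
  have rW': "\<forall>u\<in>W'. (u,r) \<in> (induced_arcs A W')\<^sup>*"
  proof
    fix x assume "x \<in> W'"
    then consider "x \<in> W" | "x = k" using k by blast
    then show "(x,r) \<in> (induced_arcs A W')\<^sup>*"
    proof cases
      case 1 then show ?thesis using r(2) ind_mono[of W W' x r A] k by blast
    next
      case 2
      have "(k,j) \<in> induced_arcs A W'" using j k by (auto simp: induced_arcs_def)
      moreover have "(j,r) \<in> (induced_arcs A W')\<^sup>*" using r(2) j ind_mono[of W W' j r A] k by blast
      ultimately show ?thesis using 2 by (blast intro: converse_rtrancl_into_rtrancl)
    qed
  qed
  show ?case
  proof (cases "k \<in> X")
    case True
    then have "W' \<subseteq> X" using k X by blast
    then show ?thesis using rW' X r k by blast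
  next
    case False
    have jX: "j \<in> X" using j X by blast
    have wX: "w \<in> X - {j}" using w X by blast
    obtain N where N: "k \<in> N" "N \<subseteq> V" "und_connected A (X \<union> N)"
      "\<forall>v\<in>X\<union>N. und_connected A ((X\<union>N)-{v})"
      "\<forall>n\<in>N. \<exists>x\<in>X. (n,x) \<in> (induced_arcs A (X \<union> N))\<^sup>*"
      using ear[OF finV X(2) jX _ False j(2) u wX w(2) X(3) X(4)] k by blast
    have reach: "\<forall>x\<in>X \<union> N. (x,r) \<in> (induced_arcs A (X \<union> N))\<^sup>*"
    proof
      fix x assume x: "x \<in> X \<union> N"
      have Xr: "(y,r) \<in> (induced_arcs A (X \<union> N))\<^sup>*" if "y \<in> X" for y
        using X(5) that ind_mono[of X "X \<union> N" y r A] by blast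
      show "(x,r) \<in> (induced_arcs A (X \<union> N))\<^sup>*"
      proof (cases "x \<in> X")
        case True then show ?thesis using Xr by blast
      next
        case False
        then obtain y where "y \<in> X" "(x,y) \<in> (induced_arcs A (X \<union> N))\<^sup>*" using x N(5) by blast
        then show ?thesis using Xr by (blast intro: rtrancl_trans)
      qed
    qed
    have "W' \<subseteq> X \<union> N" using k X N by blast
    moreover have "X \<union> N \<subseteq> V" using X N by blast
    ultimately show ?thesis using rW' r k N(3) N(4) reach by blast
  qed
qed

theorem mainTheorem5:
  fixes V :: "'a set" and A :: "('a \<times> 'a) set" and W :: "'a set"
  assumes "finite V"
    and "A \<subseteq> V \<times> V"
    and "W \<subseteq> V"
    and "3 \<le> card W"
    and "\<exists>P. connected_pair A P \<and> can_be_generated_from V A P W"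
  shows "\<exists>X. W \<subseteq> X \<and> X \<subseteq> V \<and> directed_sub_block A X \<and>
           (\<exists>i\<in>W. (\<forall>u\<in>W. (u, i) \<in> (induced_arcs A W)\<^sup>*) \<and>
                   (\<forall>u\<in>X. (u, i) \<in> (induced_arcs A X)\<^sup>*))"
proof -
  obtain P where P: "connected_pair A P" "generated V A P W"
    using assms(5) unfolding can_be_generated_from_def by blast
  obtain r X where r: "r \<in> W" "\<forall>u\<in>W. (u,r) \<in> (induced_arcs A W)\<^sup>*"
    and X: "W \<subseteq> X" "X \<subseteq> V" "und_connected A X" "\<forall>v\<in>X. und_connected A (X-{v})"
      "\<forall>x\<in>X. (x,r) \<in> (induced_arcs A X)\<^sup>*"
    using main_ind[OF P(2) assms(1,2) P(1)] by blast
  have finX: "finite X" using X(2) assms(1) by (rule finite_subset)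
  have "card W \<le> card X" using finX X(1) by (rule card_mono)
  then have "3 \<le> card X" using assms(4) by simp
  then have "directed_sub_block A X"
    unfolding directed_sub_block_def und_biconnected_def using finX X r(1) by blast
  then show ?thesis using X r by blast
qed

end
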